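(* Let $r_o>0$, $\tau>0$, $\alpha>0$ and $\beta\in(0,1]$ be constants. For $m<0$, let $u_m:[0,\infty)\to[r_o,\infty)$ be the solution of $$u_m(0)=r_o,\qquad u_m'(s)=\left(1-\frac{2m}{u_m(s)}\right)^{1/2},$$ and set $k=\tau(1-2m/r_o)^{-1/2}$. For $m$ sufficiently negative (so that $\beta>(1+\alpha/2)k^2$), let $A_o(m)$ be the smallest positive root $A$ of $$\beta-k^2-\frac\alpha2A^{-2}u_m^2(Ak)=0.$$ Let $\theta>0$ be the unique positive root of $\theta^3-\frac{3\tau}{2}\left(\frac{\alpha}{2\beta}\right)^{1/2}\theta^2-1=0$. Then $$\lim_{m\to-\infty}A_o(m)=r_o\theta^2\left(\frac{\alpha}{2\beta}\right)^{1/2},\qquad \lim_{m\to-\infty}u_m(A_o(m)k)=r_o\theta^2.$$ *)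

theory Defs
  imports "HOL-Analysis.Analysis"
begin

definition is_u_sol :: "real \<Rightarrow> real \<Rightarrow> (real \<Rightarrow> real) \<Rightarrow> bool" where
  "is_u_sol r m u \<longleftrightarrow> u 0 = r \<and> (\<forall>s\<ge>0. u s \<ge> r) \<and>
     (\<forall>s\<ge>0. (u has_real_derivative sqrt (1 - 2 * m / u s)) (at s within {0..}))"

definition kk :: "real \<Rightarrow> real \<Rightarrow> real \<Rightarrow> real" where
  "kk \<tau> r m = \<tau> / sqrt (1 - 2 * m / r)"

definition F :: "real \<Rightarrow> real \<Rightarrow> real \<Rightarrow> (real \<Rightarrow> real) \<Rightarrow> real \<Rightarrow> real" where
  "F \<alpha> \<beta> k u A = \<beta> - k\<^sup>2 - \<alpha> / 2 * (1 / A\<^sup>2) * (u (A * k))\<^sup>2"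

definition A_o :: "real \<Rightarrow> real \<Rightarrow> real \<Rightarrow> (real \<Rightarrow> real) \<Rightarrow> real" where
  "A_o \<alpha> \<beta> k u = (THE A. A > 0 \<and> F \<alpha> \<beta> k u A = 0 \<and>
       (\<forall>B. 0 < B \<and> B < A \<longrightarrow> F \<alpha> \<beta> k u B \<noteq> 0))"

definition theta :: "real \<Rightarrow> real \<Rightarrow> real \<Rightarrow> real" where
  "theta \<tau> \<alpha> \<beta> = (THE \<theta>. \<theta> > 0 \<and>
       \<theta> ^ 3 - 3 * \<tau> / 2 * sqrt (\<alpha> / (2 * \<beta>)) * \<theta> ^ 2 - 1 = 0)"

end

theory Submission
  imports Defs "HOL-Real_Asymp.Real_Asymp"
begin

lemma deriv_mono:
  fixes f f' :: "real \<Rightarrow> real"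
  assumes d: "\<And>s. s \<ge> 0 \<Longrightarrow> (f has_real_derivative f' s) (at s within {0..})"
    and nn: "\<And>s. a < s \<Longrightarrow> s < b \<Longrightarrow> f' s \<ge> 0" and a: "0 \<le> a" and ab: "a \<le> b"
  shows "f a \<le> f b"
proof (rule DERIV_nonneg_imp_increasing_open[OF ab])
  fix x assume x: "a < x" "x < b"
  have "(f has_real_derivative f' x) (at x within {0<..})"
    by (rule DERIV_subset[OF d]) (use x a in auto)
  hence "(f has_real_derivative f' x) (at x)" using at_within_open[of x "{0<..}"] x a by auto
  thus "\<exists>y. (f has_real_derivative y) (at x) \<and> 0 \<le> y" using nn x by blast
next
  have "continuous_on {0..} f" by (rule DERIV_continuous_on) (use d in auto)
  thus "continuous_on {a..b} f" by (rule continuous_on_subset) (use a in auto)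
qed


lemma u_facts:
  assumes sol: "is_u_sol r m u" and m: "m < 0" and r: "r > 0"
  shows "continuous_on {0..} u"
    and "\<And>s t. 0 \<le> s \<Longrightarrow> s \<le> t \<Longrightarrow> u s \<le> u t"
    and "\<And>s. 0 \<le> s \<Longrightarrow> r * sqrt r + 3/2 * sqrt (-2*m) * s \<le> u s * sqrt (u s)"
    and "\<And>s. 0 \<le> s \<Longrightarrow> u s * sqrt (u s) \<le> r * sqrt r + 3/2 * sqrt (u s - 2*m) * s"
    and "\<And>s. 0 \<le> s \<Longrightarrow> u s \<le> r + sqrt (1 - 2*m/r) * s"
proof -
  have u0: "u 0 = r" and ge: "\<And>s. s \<ge> 0 \<Longrightarrow> u s \<ge> r"
    and d: "\<And>s. s \<ge> 0 \<Longrightarrow> (u has_real_derivative sqrt (1 - 2 * m / u s)) (at s within {0..})"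
    using sol unfolding is_u_sol_def by auto
  have pos: "\<And>s. s \<ge> 0 \<Longrightarrow> u s > 0" using ge r by (meson less_le_trans)
  show "continuous_on {0..} u" by (rule DERIV_continuous_on) (use d in auto)
  have le1: "2 * m / u s \<le> 1" if "s \<ge> 0" for s
    using pos[OF that] m by (smt (verit) divide_nonpos_pos)
  show mono: "\<And>s t. 0 \<le> s \<Longrightarrow> s \<le> t \<Longrightarrow> u s \<le> u t"
    by (rule deriv_mono[OF d]) (auto intro: le1)
  have dP: "((\<lambda>s. u s * sqrt (u s)) has_real_derivative 3/2 * sqrt (u s - 2*m)) (at s within {0..})"
    if s: "s \<ge> 0" for s
  proof -
    have v: "u s > 0" using pos s .
    have e: "sqrt (1 - 2*m/u s) * sqrt (u s) = sqrt (u s - 2*m)"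
      using v by (simp add: real_sqrt_mult[symmetric] field_simps)
    have e2: "u s * inverse (sqrt (u s)) = sqrt (u s)"
      using v by (metis real_div_sqrt divide_inverse less_imp_le)
    have "((\<lambda>s. u s * sqrt (u s)) has_real_derivative
        sqrt (1 - 2*m/u s) * sqrt (u s) + u s * (inverse (sqrt (u s)) / 2 * sqrt (1 - 2*m/u s))) (at s within {0..})"
      using DERIV_mult'[OF d[OF s] DERIV_chain2[OF DERIV_real_sqrt[OF v] d[OF s]]] by (simp add: add.commute)
    moreover have "sqrt (1 - 2*m/u s) * sqrt (u s) + u s * (inverse (sqrt (u s)) / 2 * sqrt (1 - 2*m/u s))
       = 3/2 * sqrt (u s - 2*m)"
    proof -
      have "u s * (inverse (sqrt (u s)) / 2 * sqrt (1 - 2*m/u s)) = (u s * inverse (sqrt (u s))) * sqrt (1 - 2*m/u s) / 2"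
        by simp
      also have "\<dots> = sqrt (u s - 2*m) / 2" using e e2 by (simp add: mult.commute)
      finally show ?thesis using e by simp
    qed
    ultimately show ?thesis by (rule DERIV_cong)
  qed
  show "r * sqrt r + 3/2 * sqrt (-2*m) * s \<le> u s * sqrt (u s)" if s: "0 \<le> s" for s
  proof -
    have "(\<lambda>s. u s * sqrt (u s) - 3/2 * sqrt (-2*m) * s) 0 \<le> (\<lambda>s. u s * sqrt (u s) - 3/2 * sqrt (-2*m) * s) s"
    proof (rule deriv_mono[where f="\<lambda>s. u s * sqrt (u s) - 3/2 * sqrt (-2*m) * s" and f'="\<lambda>s. 3/2 * sqrt (u s - 2*m) - 3/2 * sqrt (-2*m)" and a=0 and b=s])
      fix t :: real assume "t \<ge> 0"
      then show "((\<lambda>s. u s * sqrt (u s) - 3/2 * sqrt (-2*m) * s) has_real_derivative 3/2 * sqrt (u t - 2*m) - 3/2 * sqrt (-2*m)) (at t within {0..})"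
        using DERIV_diff[OF dP DERIV_cmult[OF DERIV_ident, of "3/2 * sqrt (-2*m)"]] by simp
    next
      fix t :: real assume "0 < t" "t < s"
      then show "3/2 * sqrt (u t - 2*m) - 3/2 * sqrt (-2*m) \<ge> 0" using pos[of t] by simp
    qed (use s in auto)
    thus ?thesis using u0 by simp
  qed
  show "u s * sqrt (u s) \<le> r * sqrt r + 3/2 * sqrt (u s - 2*m) * s" if s: "0 \<le> s" for s
  proof -
    have "(\<lambda>t. 3/2 * sqrt (u s - 2*m) * t - u t * sqrt (u t)) 0 \<le> (\<lambda>t. 3/2 * sqrt (u s - 2*m) * t - u t * sqrt (u t)) s"
    proof (rule deriv_mono[where f="\<lambda>t. 3/2 * sqrt (u s - 2*m) * t - u t * sqrt (u t)" and f'="\<lambda>t. 3/2 * sqrt (u s - 2*m) - 3/2 * sqrt (u t - 2*m)" and a=0 and b=s])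
      fix t :: real assume "t \<ge> 0"
      then show "((\<lambda>t. 3/2 * sqrt (u s - 2*m) * t - u t * sqrt (u t)) has_real_derivative 3/2 * sqrt (u s - 2*m) - 3/2 * sqrt (u t - 2*m)) (at t within {0..})"
        using DERIV_diff[OF DERIV_cmult[OF DERIV_ident, of "3/2 * sqrt (u s - 2*m)"] dP] by simp
    next
      fix t :: real assume "0 < t" "t < s"
      then show "3/2 * sqrt (u s - 2*m) - 3/2 * sqrt (u t - 2*m) \<ge> 0" using mono[of t s] by simp
    qed (use s in auto)
    thus ?thesis using u0 by simp
  qed
  show "u s \<le> r + sqrt (1 - 2*m/r) * s" if s: "0 \<le> s" for s
  proof -
    have "(\<lambda>t. sqrt (1 - 2*m/r) * t - u t) 0 \<le> (\<lambda>t. sqrt (1 - 2*m/r) * t - u t) s"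
    proof (rule deriv_mono[where f="\<lambda>t. sqrt (1 - 2*m/r) * t - u t" and f'="\<lambda>t. sqrt (1 - 2*m/r) - sqrt (1 - 2 * m / u t)" and a=0 and b=s])
      fix t :: real assume "t \<ge> 0"
      then show "((\<lambda>t. sqrt (1 - 2*m/r) * t - u t) has_real_derivative sqrt (1 - 2*m/r) - sqrt (1 - 2 * m / u t)) (at t within {0..})"
        using DERIV_diff[OF DERIV_cmult[OF DERIV_ident, of "sqrt (1 - 2*m/r)"] d] by simp
    next
      fix t :: real assume t: "0 < t" "t < s"
      have "- 2 * m / u t \<le> - 2 * m / r"
        by (rule divide_left_mono) (use m r ge[of t] t in auto)
      then show "sqrt (1 - 2*m/r) - sqrt (1 - 2 * m / u t) \<ge> 0" by simp
    qed (use s in auto)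
    thus ?thesis using u0 by simp
  qed
qed

lemma root_loc:
  fixes Fn :: "real \<Rightarrow> real"
  assumes cont: "continuous_on {0<..} Fn" and neg: "\<And>A. 0 < A \<Longrightarrow> A \<le> A1 \<Longrightarrow> Fn A < 0"
    and pos: "Fn A2 > 0" and A1: "0 < A1" and A12: "A1 \<le> A2"
  shows "A1 < (THE A. A > 0 \<and> Fn A = 0 \<and> (\<forall>B. 0 < B \<and> B < A \<longrightarrow> Fn B \<noteq> 0)) \<and>
         (THE A. A > 0 \<and> Fn A = 0 \<and> (\<forall>B. 0 < B \<and> B < A \<longrightarrow> Fn B \<noteq> 0)) \<le> A2 \<and>
         Fn (THE A. A > 0 \<and> Fn A = 0 \<and> (\<forall>B. 0 < B \<and> B < A \<longrightarrow> Fn B \<noteq> 0)) = 0"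
    (is "A1 < ?T \<and> ?T \<le> A2 \<and> Fn ?T = 0")
proof -
  define Z where "Z = {A \<in> {A1..A2}. Fn A = 0}"
  have c2: "continuous_on {A1..A2} Fn" by (rule continuous_on_subset[OF cont]) (use A1 in auto)
  have "\<exists>x\<ge>A1. x \<le> A2 \<and> Fn x = 0" by (rule IVT') (use neg[of A1] pos A1 A12 c2 in auto)
  hence Zne: "Z \<noteq> {}" unfolding Z_def by auto
  have Zcl: "closed Z" unfolding Z_def by (rule continuous_closed_preimage_constant[OF c2]) simp
  have Zbd: "bdd_below Z" unfolding Z_def by (auto intro: bdd_belowI[of _ A1])
  define A0 where "A0 = Inf Z"
  have A0Z: "A0 \<in> Z" using closed_contains_Inf[OF Zne Zbd Zcl] A0_def by simp
  then have A0: "A1 \<le> A0" "A0 \<le> A2" "Fn A0 = 0" unfolding Z_def by auto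
  have A1lt: "A1 < A0" using A0 neg[of A1] A1 by (cases "A0 = A1") auto
  have P: "A0 > 0 \<and> Fn A0 = 0 \<and> (\<forall>B. 0 < B \<and> B < A0 \<longrightarrow> Fn B \<noteq> 0)"
  proof (intro conjI allI impI)
    fix B assume B: "0 < B \<and> B < A0"
    show "Fn B \<noteq> 0"
    proof (cases "B \<le> A1")
      case True thus ?thesis using neg B by force
    next
      case False
      show ?thesis
      proof
        assume "Fn B = 0"
        hence "B \<in> Z" using False B A0 unfolding Z_def by auto
        hence "A0 \<le> B" unfolding A0_def by (rule cInf_lower[OF _ Zbd])
        thus False using B by simp
      qed
    qed
  qed (use A0 A1lt A1 in auto)
  have "?T = A0"
  proof (rule the_equality)
    show "A0 > 0 \<and> Fn A0 = 0 \<and> (\<forall>B. 0 < B \<and> B < A0 \<longrightarrow> Fn B \<noteq> 0)" using P .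
    fix A assume HA: "A > 0 \<and> Fn A = 0 \<and> (\<forall>B. 0 < B \<and> B < A \<longrightarrow> Fn B \<noteq> 0)"
    show "A = A0"
    proof (rule ccontr)
      assume "A \<noteq> A0"
      then consider "A < A0" | "A0 < A" by linarith
      then show False using HA P by cases auto
    qed
  qed
  thus ?thesis using A0 A1lt by simp
qed

lemma cubic_root:
  fixes K :: real assumes K: "K \<ge> 0"
  shows "\<exists>!\<theta>. \<theta> > 0 \<and> \<theta>^3 - K*\<theta>^2 - 1 = 0"
proof (rule ex_ex1I)
  have "\<exists>x\<ge>0. x \<le> K+1 \<and> x^3 - K*x^2 - 1 = 0"
  proof (rule IVT')
    have "(K+1)^3 - K*(K+1)^2 - 1 = (K+1)^2 - 1" by (simp add: power2_eq_square power3_eq_cube algebra_simps)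
    also have "\<dots> \<ge> 0" using K by (simp add: power2_eq_square algebra_simps)
    finally show "0 \<le> (K+1)^3 - K*(K+1)^2 - 1" .
  qed (use K in \<open>auto intro!: continuous_intros\<close>)
  then obtain x where x: "x \<ge> 0" "x^3 - K*x^2 - 1 = 0" by auto
  have "x \<noteq> 0" using x by auto
  then show "\<exists>x. x > 0 \<and> x^3 - K*x^2 - 1 = 0" using x by (intro exI[of _ x]) auto
next
  have lt: False if x: "x > 0" "x^3 - K*x^2 - 1 = 0" and y: "y > 0" "y^3 - K*y^2 - 1 = 0" and xy: "x < y" for x y
  proof -
    have ex: "x^2 * (x - K) = 1" using x(2) by (simp add: power2_eq_square power3_eq_cube algebra_simps)
    have ey: "y^2 * (y - K) = 1" using y(2) by (simp add: power2_eq_square power3_eq_cube algebra_simps)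
    have "x - K > 0" using ex x(1) by (smt (verit) mult_nonneg_nonpos zero_le_power2)
    moreover have "x^2 < y^2" using x(1) xy by (intro power_strict_mono) auto
    ultimately have "x^2 * (x - K) < y^2 * (y - K)" using xy x(1)
      by (intro mult_strict_mono) auto
    thus False using ex ey by simp
  qed
  fix x y assume "x > 0 \<and> x^3 - K*x^2 - 1 = 0" "y > 0 \<and> y^3 - K*y^2 - 1 = 0"
  then show "x = y" using lt[of x y] lt[of y x] by (cases x y rule: linorder_cases) auto
qed

lemma ineqA:
  fixes d0 L a b A A1 :: real
  assumes d0: "d0 > 0" and L: "L > 0" and a: "a > 0" and b: "b \<ge> 0" and A: "0 < A" "A \<le> A1" and A1: "A1 < L"
    and key: "(d0*L) * sqrt (d0*L) = a + b*L"
  shows "(d0*A) * sqrt (d0*A) \<le> sqrt (A1/L) * (a + b*A)"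
proof -
  have s: "sqrt (d0*A) = sqrt (d0*L) * sqrt (A/L)"
    using d0 L by (simp add: real_sqrt_mult[symmetric])
  have "(d0*A) * sqrt (d0*A) = ((d0*L) * sqrt (d0*L)) * (A/L) * sqrt (A/L)" using s L by (simp add: field_simps)
  also have "\<dots> = (a + b*L) * (A/L) * sqrt (A/L)" using key by simp
  also have "\<dots> \<le> (a + b*L) * (A/L) * sqrt (A1/L)"
    using a b L A by (intro mult_left_mono) (auto intro!: divide_right_mono)
  also have "(a + b*L) * (A/L) \<le> a + b*A"
  proof -
    have "(a + b*L) * (A/L) = a * (A/L) + b*A" using L by (simp add: field_simps)
    moreover have "a * (A/L) \<le> a" using a A A1 L by (simp add: field_simps)
    ultimately show ?thesis by simp
  qed
  hence "(a + b*L) * (A/L) * sqrt (A1/L) \<le> (a + b*A) * sqrt (A1/L)"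
    using A L by (intro mult_right_mono) auto
  finally show ?thesis by (simp add: mult.commute)
qed

lemma ineqB:
  fixes d0 L a b A2 :: real
  assumes d0: "d0 > 0" and L: "L > 0" and a: "a > 0" and b: "b \<ge> 0" and A2: "L < A2"
    and key: "(d0*L) * sqrt (d0*L) = a + b*L"
  shows "(d0*A2) * sqrt (d0*A2) > a + b*A2"
proof -
  have s: "sqrt (d0*A2) = sqrt (d0*L) * sqrt (A2/L)"
    using d0 L by (simp add: real_sqrt_mult[symmetric])
  have "(d0*A2) * sqrt (d0*A2) = ((d0*L) * sqrt (d0*L)) * (A2/L) * sqrt (A2/L)" using s L by (simp add: field_simps)
  also have "\<dots> = (a + b*L) * (A2/L) * sqrt (A2/L)" using key by simp
  finally have e: "(d0*A2) * sqrt (d0*A2) = (a + b*L) * (A2/L) * sqrt (A2/L)" .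
  have pos: "(a + b*L) * (A2/L) > 0" using a b L A2 by (intro mult_pos_pos add_pos_nonneg) auto
  have "sqrt (A2/L) > 1" using A2 L by simp
  hence "(a + b*L) * (A2/L) < (a + b*L) * (A2/L) * sqrt (A2/L)" using pos
    by (metis mult.right_neutral mult_strict_left_mono)
  moreover have "(a + b*L) * (A2/L) = a * (A2/L) + b*A2" using L by (simp add: field_simps)
  moreover have "a * (A2/L) \<ge> a" using a A2 L by (simp add: field_simps)
  ultimately show ?thesis using e by linarith
qed

lemma Pmono:
  fixes x y :: real
  assumes "0 \<le> x" "0 \<le> y" "x * sqrt x < y * sqrt y" shows "x < y"
proof (rule ccontr)
  assume "\<not> x < y"
  hence "y \<le> x" by simp
  hence "y * sqrt y \<le> x * sqrt x" using assms by (intro mult_mono) auto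
  thus False using assms by simp
qed

lemma per_m:
  fixes r m \<tau> \<alpha> \<beta> d0 L A1 A2 D :: real and u :: "real \<Rightarrow> real"
  assumes sol: "is_u_sol r m u" and m: "m < 0" and r: "r > 0" and \<tau>: "\<tau> > 0" and \<alpha>: "\<alpha> > 0"
    and d0: "d0 > 0" "d0^2 = 2*\<beta>/\<alpha>" and L: "L > 0"
    and key: "(d0*L) * sqrt (d0*L) = r * sqrt r + 3/2*\<tau> * sqrt r * L"
    and A1: "0 < A1" "A1 < L" and A2: "L < A2"
    and q: "sqrt (A1/L) < sqrt (-2*m) * kk \<tau> r m / (\<tau> * sqrt r)"
    and kb: "(kk \<tau> r m)^2 < \<beta>"
    and D: "D = sqrt (2*(\<beta> - (kk \<tau> r m)^2)/\<alpha>)"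
    and p: "r * sqrt r + 3/2*\<tau> * sqrt r * (sqrt (r + A2*\<tau> - 2*m) * kk \<tau> r m / (\<tau> * sqrt r)) * A2 < (D*A2) * sqrt (D*A2)"
  shows "A1 < A_o \<alpha> \<beta> (kk \<tau> r m) u \<and> A_o \<alpha> \<beta> (kk \<tau> r m) u \<le> A2 \<and>
         u (A_o \<alpha> \<beta> (kk \<tau> r m) u * kk \<tau> r m) = A_o \<alpha> \<beta> (kk \<tau> r m) u * D"
proof -
  define k where "k = kk \<tau> r m"
  define a where "a = r * sqrt r"
  define b where "b = 3/2*\<tau> * sqrt r"
  have sr: "sqrt r > 0" using r by simp
  have "1 - 2*m/r > 0" using m r by (smt (verit) divide_neg_pos)
  hence s1: "sqrt (1 - 2*m/r) > 0" by simp
  have k0: "k > 0" unfolding k_def kk_def using \<tau> s1 by simp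
  have sk: "sqrt (1 - 2*m/r) * k = \<tau>" unfolding k_def kk_def using s1 m r by simp
  note uf = u_facts[OF sol m r]
  have a0: "a > 0" unfolding a_def using r by simp
  have b0: "b > 0" unfolding b_def using r \<tau> by simp
  have upos: "\<And>s. s \<ge> 0 \<Longrightarrow> u s > 0" using sol r unfolding is_u_sol_def by (meson less_le_trans)
  have Fe: "F \<alpha> \<beta> k u = (\<lambda>A. \<beta> - k\<^sup>2 - \<alpha> / 2 * (1 / A\<^sup>2) * (u (A * k))\<^sup>2)"
    by (rule ext) (simp add: F_def)
  have neg: "F \<alpha> \<beta> k u A < 0" if A: "0 < A" "A \<le> A1" for A
  proof -
    define s where "s = A * k"
    have s0: "s \<ge> 0" using A k0 by (simp add: s_def)
    have lo: "a + 3/2 * sqrt (-2*m) * s \<le> u s * sqrt (u s)" using uf(3)[OF s0] a_def by simp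
    define qv where "qv = sqrt (-2*m) * k / (\<tau> * sqrt r)"
    have eq: "3/2 * sqrt (-2*m) * s = b * qv * A" unfolding qv_def b_def s_def using \<tau> sr by (simp add: field_simps)
    have \<rho>: "sqrt (A1/L) < 1" using A1 L by simp
    have "(d0*A) * sqrt(d0*A) \<le> sqrt (A1/L) * (a + b*A)"
      by (rule ineqA) (use d0 L a0 b0 A A1 key a_def b_def in auto)
    also have "\<dots> < a + b*qv*A"
    proof -
      have "sqrt (A1/L) * a < a" using \<rho> a0 by simp
      moreover have "sqrt (A1/L) * (b*A) < qv * (b*A)" using q b0 A unfolding qv_def k_def
        by (intro mult_strict_right_mono) auto
      ultimately show ?thesis by (simp add: algebra_simps)
    qed
    finally have "(d0*A) * sqrt(d0*A) < u s * sqrt(u s)" using lo eq by simp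
    hence "d0*A < u s" by (rule Pmono[rotated 2]) (use d0 A upos[OF s0] in auto)
    hence "(d0*A)^2 < (u s)^2" using d0 A by (intro power_strict_mono) auto
    hence "2*\<beta>/\<alpha> * A^2 < (u s)^2" using d0 by (simp add: power_mult_distrib)
    hence "\<beta> < \<alpha>/2 * (1/A^2) * (u s)^2" using \<alpha> A by (simp add: field_simps)
    thus ?thesis unfolding F_def s_def using zero_le_power2[of k] by linarith
  qed
  have posF: "F \<alpha> \<beta> k u A2 > 0"
  proof -
    define s where "s = A2 * k"
    have s0: "s \<ge> 0" using A2 L k0 by (simp add: s_def)
    have "sqrt (1 - 2*m/r) * s = A2 * \<tau>" using sk unfolding s_def by (metis mult.left_commute)
    hence crude: "u s \<le> r + A2 * \<tau>" using uf(5)[OF s0] by simp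
    have up: "u s * sqrt (u s) \<le> a + 3/2 * sqrt (u s - 2*m) * s" using uf(4)[OF s0] a_def by simp
    have "sqrt (u s - 2*m) \<le> sqrt (r + A2*\<tau> - 2*m)" using crude by simp
    hence "3/2 * sqrt (u s - 2*m) * s \<le> 3/2 * sqrt (r + A2*\<tau> - 2*m) * s" using s0 by (intro mult_right_mono) auto
    also have "\<dots> = b * (sqrt (r + A2*\<tau> - 2*m) * k / (\<tau> * sqrt r)) * A2" unfolding b_def s_def using \<tau> sr by (simp add: field_simps)
    finally have "u s * sqrt (u s) < (D*A2) * sqrt(D*A2)" using up p unfolding a_def b_def k_def by linarith
    moreover have D0: "D \<ge> 0" using D kb \<alpha> unfolding k_def by simp
    ultimately have "u s < D*A2" using Pmono[of "u s" "D*A2"] upos[OF s0] A2 L by auto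
    hence "(u s)^2 < (D*A2)^2" using upos[OF s0] by (intro power_strict_mono) auto
    also have "(D*A2)^2 = 2*(\<beta> - k^2)/\<alpha> * A2^2" using D kb \<alpha> by (simp add: power_mult_distrib k_def)
    finally have "\<alpha>/2 * (1/A2^2) * (u s)^2 < \<beta> - k^2" using \<alpha> A2 L by (simp add: field_simps)
    thus ?thesis unfolding F_def s_def by simp
  qed
  have cont: "continuous_on {0<..} (F \<alpha> \<beta> k u)"
  proof -
    have "continuous_on {0<..} (\<lambda>A. u (A*k))"
      by (rule continuous_on_compose2[OF uf(1)]) (use k0 in \<open>auto intro!: continuous_intros\<close>)
    then show ?thesis unfolding Fe by (auto intro!: continuous_intros)
  qed
  have R: "A1 < A_o \<alpha> \<beta> k u \<and> A_o \<alpha> \<beta> k u \<le> A2 \<and> F \<alpha> \<beta> k u (A_o \<alpha> \<beta> k u) = 0"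
    unfolding A_o_def by (rule root_loc[OF cont neg posF]) (use A1 A2 in auto)
  define Ao where "Ao = A_o \<alpha> \<beta> k u"
  have Ao0: "Ao > 0" using R A1 Ao_def by auto
  have "\<alpha>/2 * (1/Ao^2) * (u (Ao*k))^2 = \<beta> - k^2" using R unfolding Ao_def[symmetric] F_def by simp
  hence "(u (Ao*k))^2 = Ao^2 * (2*(\<beta> - k^2)/\<alpha>)" using \<alpha> Ao0 by (simp add: field_simps)
  hence "sqrt ((u (Ao*k))^2) = sqrt (Ao^2) * sqrt (2*(\<beta> - k^2)/\<alpha>)" by (metis real_sqrt_mult)
  hence "sqrt ((u (Ao*k))^2) = Ao * D" using Ao0 D unfolding k_def by simp
  moreover have "u (Ao*k) > 0" using upos Ao0 k0 by simp
  ultimately have "u (Ao*k) = Ao * D" by simp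
  thus ?thesis using R unfolding Ao_def k_def by simp
qed

lemma lim_k: "r > 0 \<Longrightarrow> ((\<lambda>m. kk \<tau> r m) \<longlongrightarrow> 0) at_bot"
  unfolding kk_def by real_asymp

lemma ratio_eq:
  assumes r: "r > 0" and t: "\<tau> > 0"
  shows "sqrt X * kk \<tau> r m / (\<tau> * sqrt r) = sqrt (X / (r - 2*m))"
proof -
  have "sqrt X * kk \<tau> r m / (\<tau> * sqrt r) = sqrt X / (sqrt (1 - 2*m/r) * sqrt r)"
    unfolding kk_def using t by simp
  also have "sqrt (1 - 2*m/r) * sqrt r = sqrt (r - 2*m)"
  proof -
    have "(1 - 2*m/r) * r = r - 2*m" using r by (simp add: algebra_simps)
    thus ?thesis by (metis real_sqrt_mult)
  qed
  finally show ?thesis by (simp add: real_sqrt_divide)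
qed

lemma lim_q: assumes "r > 0" "\<tau> > 0" shows "((\<lambda>m. sqrt (-2*m) * kk \<tau> r m / (\<tau> * sqrt r)) \<longlongrightarrow> 1) at_bot"
proof -
  have "((\<lambda>m::real. sqrt (-2*m / (r - 2*m))) \<longlongrightarrow> 1) at_bot" by real_asymp
  thus ?thesis using ratio_eq[OF assms] by simp
qed

lemma lim_p: assumes "r > 0" "\<tau> > 0" shows "((\<lambda>m. sqrt (r + A2*\<tau> - 2*m) * kk \<tau> r m / (\<tau> * sqrt r)) \<longlongrightarrow> 1) at_bot"
proof -
  have "((\<lambda>m::real. sqrt ((r + A2*\<tau> - 2*m) / (r - 2*m))) \<longlongrightarrow> 1) at_bot" by real_asymp
  thus ?thesis using ratio_eq[OF assms] by simp
qed

theorem mainTheorem7: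
  fixes r \<tau> \<alpha> \<beta> :: real and u :: "real \<Rightarrow> real \<Rightarrow> real"
  assumes "r > 0" "\<tau> > 0" "\<alpha> > 0" "0 < \<beta>" "\<beta> \<le> 1"
    and "\<forall>m<0. is_u_sol r m (u m)"
  shows "((\<lambda>m. A_o \<alpha> \<beta> (kk \<tau> r m) (u m))
            \<longlongrightarrow> r * (theta \<tau> \<alpha> \<beta>)\<^sup>2 * sqrt (\<alpha> / (2 * \<beta>))) at_bot \<and>
         ((\<lambda>m. u m (A_o \<alpha> \<beta> (kk \<tau> r m) (u m) * kk \<tau> r m))
            \<longlongrightarrow> r * (theta \<tau> \<alpha> \<beta>)\<^sup>2) at_bot"
proof -
  note r = assms(1) and \<tau> = assms(2) and \<alpha> = assms(3) and \<beta> = assms(4) and sol = assms(6)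
  define K where "K = 3 * \<tau> / 2 * sqrt (\<alpha> / (2 * \<beta>))"
  define \<theta> where "\<theta> = theta \<tau> \<alpha> \<beta>"
  have K0: "K \<ge> 0" using \<tau> \<alpha> \<beta> by (simp add: K_def)
  have \<theta>P: "\<theta> > 0 \<and> \<theta>^3 - K*\<theta>^2 - 1 = 0"
    unfolding \<theta>_def theta_def K_def[symmetric] by (rule theI'[OF cubic_root[OF K0]])
  hence \<theta>0: "\<theta> > 0" and \<theta>e: "\<theta>^3 = 1 + K*\<theta>^2" by auto
  define c where "c = sqrt (\<alpha>/(2*\<beta>))"
  define d0 where "d0 = sqrt (2*\<beta>/\<alpha>)"
  define L where "L = r * \<theta>^2 * c"
  have c0: "c > 0" unfolding c_def using \<alpha> \<beta> by simp
  have d00: "d0 > 0" unfolding d0_def using \<alpha> \<beta> by simp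
  have dc: "d0 * c = 1" unfolding d0_def c_def using \<alpha> \<beta> by (simp add: real_sqrt_mult[symmetric])
  have d0sq: "d0^2 = 2*\<beta>/\<alpha>" unfolding d0_def using \<alpha> \<beta> by simp
  have L0: "L > 0" unfolding L_def using r \<theta>0 c0 by simp
  have dL: "d0 * L = r * \<theta>^2" unfolding L_def using dc by (metis mult.commute mult.left_commute mult.right_neutral)
  have key: "(d0*L) * sqrt (d0*L) = r * sqrt r + 3/2*\<tau> * sqrt r * L"
  proof -
    have "sqrt (d0*L) = sqrt r * \<theta>" using dL \<theta>0 by (simp add: real_sqrt_mult)
    hence "(d0*L) * sqrt (d0*L) = r * sqrt r * \<theta>^3" using dL by (simp add: power2_eq_square power3_eq_cube)
    also have "\<dots> = r * sqrt r + r * sqrt r * K * \<theta>^2" using \<theta>e by (simp add: algebra_simps)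
    also have "r * sqrt r * K * \<theta>^2 = 3/2*\<tau> * sqrt r * L" unfolding K_def L_def c_def by simp
    finally show ?thesis .
  qed
  define k where "k = (\<lambda>m. kk \<tau> r m)"
  define Ao where "Ao = (\<lambda>m. A_o \<alpha> \<beta> (k m) (u m))"
  define D where "D = (\<lambda>m. sqrt (2*(\<beta> - (k m)^2)/\<alpha>))"
  have kl: "(k \<longlongrightarrow> 0) at_bot" unfolding k_def using lim_k[OF r] .
  have Dl: "(D \<longlongrightarrow> d0) at_bot"
  proof -
    have "(D \<longlongrightarrow> sqrt (2*(\<beta> - 0^2)/\<alpha>)) at_bot" unfolding D_def using \<alpha> by (intro tendsto_intros kl) auto
    thus ?thesis unfolding d0_def by simp
  qed
  have main: "eventually (\<lambda>m. L - \<delta> < Ao m \<and> Ao m \<le> L + \<delta>/2 \<and> u m (Ao m * k m) = Ao m * D m) at_bot"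
    if \<delta>: "0 < \<delta>" "\<delta> < L" for \<delta>
  proof -
    define A1 where "A1 = L - \<delta>"
    define A2 where "A2 = L + \<delta>/2"
    have A1: "0 < A1" "A1 < L" and A2: "L < A2" using \<delta> by (auto simp: A1_def A2_def)
    have E0: "eventually (\<lambda>m::real. m < 0) at_bot"
      unfolding eventually_at_bot_linorder by (intro exI[of _ "-1"]) auto
    have "sqrt (A1/L) < 1" using A1 L0 by simp
    hence E1: "eventually (\<lambda>m. sqrt (A1/L) < sqrt (-2*m) * kk \<tau> r m / (\<tau> * sqrt r)) at_bot"
      using order_tendstoD(1)[OF lim_q[OF r \<tau>]] by blast
    have E2: "eventually (\<lambda>m. (kk \<tau> r m)^2 < \<beta>) at_bot"
      using order_tendstoD(2)[OF tendsto_power[OF kl, of 2]] \<beta> unfolding k_def by simp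
    define b where "b = 3/2*\<tau> * sqrt r"
    have lim3: "((\<lambda>m. (D m*A2) * sqrt (D m*A2) - (r * sqrt r + b * (sqrt (r + A2*\<tau> - 2*m) * kk \<tau> r m / (\<tau> * sqrt r)) * A2))
       \<longlongrightarrow> (d0*A2) * sqrt (d0*A2) - (r * sqrt r + b * 1 * A2)) at_bot"
      by (intro tendsto_intros Dl lim_p[OF r \<tau>])
    have "(d0*A2) * sqrt (d0*A2) > r * sqrt r + b * A2"
      by (rule ineqB[OF d00 L0 _ _ A2]) (use r \<tau> key in \<open>auto simp: b_def\<close>)
    hence E3: "eventually (\<lambda>m. r * sqrt r + b * (sqrt (r + A2*\<tau> - 2*m) * kk \<tau> r m / (\<tau> * sqrt r)) * A2 < (D m*A2) * sqrt (D m*A2)) at_bot"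
      using order_tendstoD(1)[OF lim3, of 0] by simp
    show ?thesis using E0 E1 E2 E3
    proof eventually_elim
      case (elim m)
      have "A1 < A_o \<alpha> \<beta> (kk \<tau> r m) (u m) \<and> A_o \<alpha> \<beta> (kk \<tau> r m) (u m) \<le> A2 \<and>
         u m (A_o \<alpha> \<beta> (kk \<tau> r m) (u m) * kk \<tau> r m) = A_o \<alpha> \<beta> (kk \<tau> r m) (u m) * D m"
      proof -
        have s: "is_u_sol r m (u m)" using sol elim(1) by blast
        have De: "D m = sqrt (2*(\<beta> - (kk \<tau> r m)^2)/\<alpha>)" unfolding D_def k_def by simp
        show ?thesis by (rule per_m[OF s elim(1) r \<tau> \<alpha> d00 d0sq L0 key A1 A2 elim(2) elim(3) De elim(4)[unfolded b_def]])
      qed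
      thus ?case unfolding Ao_def k_def A1_def A2_def by simp
    qed
  qed
  have T1: "(Ao \<longlongrightarrow> L) at_bot"
  proof (rule tendstoI)
    fix e :: real assume e: "e > 0"
    define \<delta> where "\<delta> = min e (L/2)"
    have \<delta>: "0 < \<delta>" "\<delta> < L" "\<delta> \<le> e" using e L0 by (auto simp: \<delta>_def)
    show "eventually (\<lambda>m. dist (Ao m) L < e) at_bot"
      using main[OF \<delta>(1,2)] by eventually_elim (use \<delta> in \<open>auto simp: dist_real_def\<close>)
  qed
  have "((\<lambda>m. Ao m * D m) \<longlongrightarrow> L * d0) at_bot" by (intro tendsto_intros T1 Dl)
  moreover have "L * d0 = r * \<theta>^2" using dL by (simp add: mult.commute)
  ultimately have "((\<lambda>m. Ao m * D m) \<longlongrightarrow> r * \<theta>^2) at_bot" by simp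
  moreover have "eventually (\<lambda>m. Ao m * D m = u m (Ao m * k m)) at_bot"
    using main[of "L/2"] L0 by (auto elim: eventually_mono)
  ultimately have T2: "((\<lambda>m. u m (Ao m * k m)) \<longlongrightarrow> r * \<theta>^2) at_bot"
    using Lim_transform_eventually[where f="\<lambda>m. Ao m * D m" and g="\<lambda>m. u m (Ao m * k m)"] by blast
  show ?thesis using T1 T2 unfolding Ao_def k_def L_def \<theta>_def c_def by simp
qed

end
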